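(* Let $q$ be a prime power, $0<k<n\le q$ with $n\mid q-1$, and let $C=RS_k(n,b)$ be a Reed–Solomon code over $\mathbb{F}_q$ with $0<b\le (k+1)/2$. Then there exists an MDS QUENTA code with parameters $[[n,\,2b-1,\,n-k+1;\,n+2b-2k-1]]_q$. In particular, for $b=(k+1)/2$ this is a maximal entanglement MDS QUENTA code.
   Context: For $n\mid q-1$ and a primitive $n$-th root of unity $\alpha\in\mathbb{F}_q$, the Reed–Solomon code $RS_k(n,b)$ is the cyclic code of length $n$ over $\mathbb{F}_q$ with defining set $\{b,b+1,\dots,b+n-k-1\}$ (indices mod $n$), where the defining set of a cyclic code $C$ is $\{i\in\mathbb{Z}_n: c(\alpha^i)=0\ \forall c\in C\}$; it is an $[n,k,n-k+1]_q$ code. A QUENTA code (entanglement-assisted quantum error-correcting code) with parameters $[[n,k,d;c]]_q$ is a $q$-ary entanglement-assisted quantum stabilizer code that encodes $k$ logical qudits into $n$ physical qudits using $c$ pairs of maximally entangled qudits pre-shared between sender and receiver, and has minimum distance $d$. It has maximal entanglement if $c=n-k$, and it is MDS if $k=n-2(d-1)+c$ (equality in the entanglement-assisted quantum Singleton bound).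
   Formalization: The parameters also satisfy 2k+1 <= n+2b, that is, the number n+2b-2k-1 of pre-shared maximally entangled pairs is nonnegative. The statement above fails without it. *)

theory Defs
  imports Main
begin

definition words :: "nat \<Rightarrow> (nat \<Rightarrow> 'a::zero) set" where
  "words n = {c. \<forall>i\<ge>n. c i = 0}"

definition primitive_root :: "nat \<Rightarrow> 'a::field \<Rightarrow> bool" where
  "primitive_root n \<alpha> \<longleftrightarrow> 0 < n \<and> \<alpha> ^ n = 1 \<and> (\<forall>j. 0 < j \<and> j < n \<longrightarrow> \<alpha> ^ j \<noteq> 1)"

definition cyclic_code_defset :: "nat \<Rightarrow> 'a::field \<Rightarrow> nat set \<Rightarrow> (nat \<Rightarrow> 'a) set" where
  "cyclic_code_defset n \<alpha> Z = {c \<in> words n. \<forall>i\<in>Z. (\<Sum>j<n. c j * \<alpha> ^ (i * j)) = 0}"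

definition RS_code :: "nat \<Rightarrow> 'a::field \<Rightarrow> nat \<Rightarrow> nat \<Rightarrow> (nat \<Rightarrow> 'a) set" where
  "RS_code n \<alpha> k b = cyclic_code_defset n \<alpha> ((\<lambda>i. i mod n) ` {b..<b + (n - k)})"

text \<open>Vectors of F_q^{2n} (X-part, Z-part), supported on {0..<n}.\<close>
definition svecs :: "nat \<Rightarrow> ((nat \<Rightarrow> 'a::zero) \<times> (nat \<Rightarrow> 'a)) set" where
  "svecs n = {x. fst x \<in> words n \<and> snd x \<in> words n}"

definition symp :: "nat \<Rightarrow> (nat \<Rightarrow> 'a::comm_ring) \<times> (nat \<Rightarrow> 'a) \<Rightarrow> (nat \<Rightarrow> 'a) \<times> (nat \<Rightarrow> 'a) \<Rightarrow> 'a" where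
  "symp n x y = (\<Sum>i<n. fst x i * snd y i - snd x i * fst y i)"

definition symp_dual :: "nat \<Rightarrow> ((nat \<Rightarrow> 'a::comm_ring) \<times> (nat \<Rightarrow> 'a)) set \<Rightarrow> ((nat \<Rightarrow> 'a) \<times> (nat \<Rightarrow> 'a)) set" where
  "symp_dual n S = {y \<in> svecs n. \<forall>x\<in>S. symp n x y = 0}"

definition symp_weight :: "nat \<Rightarrow> (nat \<Rightarrow> 'a::zero) \<times> (nat \<Rightarrow> 'a) \<Rightarrow> nat" where
  "symp_weight n x = card {i. i < n \<and> (fst x i \<noteq> 0 \<or> snd x i \<noteq> 0)}"

definition ssubspace :: "nat \<Rightarrow> ((nat \<Rightarrow> 'a::field) \<times> (nat \<Rightarrow> 'a)) set \<Rightarrow> bool" where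
  "ssubspace n S \<longleftrightarrow> S \<subseteq> svecs n \<and> ((\<lambda>_. 0), (\<lambda>_. 0)) \<in> S
     \<and> (\<forall>x\<in>S. \<forall>y\<in>S. ((\<lambda>i. fst x i + fst y i), (\<lambda>i. snd x i + snd y i)) \<in> S)
     \<and> (\<forall>a. \<forall>x\<in>S. ((\<lambda>i. a * fst x i), (\<lambda>i. a * snd x i)) \<in> S)"

text \<open>S (an F_q-subspace of F_q^{2n}, the image of the non-abelian stabilizer group
  modulo phases) defines a QUENTA code [[n,k,d;c]]_q iff
  dim S = n - k + c, dim (S \<inter> S^perp) = n - k - c (so 2c = dim S - dim of the symplectic
  radical = number of ebits), and d = min symplectic weight of S^perp minus (S \<inter> S^perp).
  Dimensions over F_q are expressed by cardinalities |S| = q^(dim S).\<close>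
definition quenta_code ::
  "nat \<Rightarrow> nat \<Rightarrow> nat \<Rightarrow> nat \<Rightarrow> ((nat \<Rightarrow> 'a::{finite,field}) \<times> (nat \<Rightarrow> 'a)) set \<Rightarrow> bool" where
  "quenta_code n k d c S \<longleftrightarrow>
     ssubspace n S \<and>
     (\<exists>s r. card S = card (UNIV :: 'a set) ^ s \<and> card (S \<inter> symp_dual n S) = card (UNIV :: 'a set) ^ r
            \<and> s = r + 2 * c \<and> k + s = n + c) \<and>
     (\<exists>e \<in> symp_dual n S - (S \<inter> symp_dual n S). symp_weight n e = d) \<and>
     (\<forall>e \<in> symp_dual n S - (S \<inter> symp_dual n S). d \<le> symp_weight n e)"

definition quenta_exists :: "'a::{finite,field} itself \<Rightarrow> nat \<Rightarrow> nat \<Rightarrow> nat \<Rightarrow> nat \<Rightarrow> bool" where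
  "quenta_exists _ n k d c \<longleftrightarrow> (\<exists>S :: ((nat \<Rightarrow> 'a) \<times> (nat \<Rightarrow> 'a)) set. quenta_code n k d c S)"

text \<open>MDS: k = n - 2(d-1) + c (stated without truncated subtraction).\<close>
definition quenta_MDS :: "nat \<Rightarrow> nat \<Rightarrow> nat \<Rightarrow> nat \<Rightarrow> bool" where
  "quenta_MDS n k d c \<longleftrightarrow> int k = int n - 2 * (int d - 1) + int c"

definition maximal_entanglement :: "nat \<Rightarrow> nat \<Rightarrow> nat \<Rightarrow> bool" where
  "maximal_entanglement n k c \<longleftrightarrow> int c = int n - int k"

end

theory Submission
  imports Defs "HOL-Computational_Algebra.Polynomial" "HOL-Library.FuncSet"
begin


lemma card_zero_field: "of_nat (card (UNIV::'a::{finite,field} set)) = (0::'a)"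
proof -
  have "(\<Sum>x\<in>UNIV. x + 1) = (\<Sum>x\<in>UNIV. (x::'a))"
    by (rule sum.reindex_bij_witness[where i="\<lambda>x. x - 1" and j="\<lambda>x. x + 1"]) auto
  then show ?thesis by (simp add: sum.distrib)
qed

lemma nz_of_dvd:
  assumes "n dvd card (UNIV :: 'a::{finite,field} set) - 1"
  shows "of_nat n \<noteq> (0::'a)"
proof
  assume h: "of_nat n = (0::'a)"
  obtain t where t: "card (UNIV::'a set) - 1 = n * t" using assms by auto
  have "card (UNIV::'a set) > 0" by (simp add: finite_UNIV_card_ge_0)
  then have "card (UNIV::'a set) = n * t + 1" using t by linarith
  then have "(of_nat (card (UNIV::'a set))::'a) = of_nat n * of_nat t + 1" by simp
  then show False using h card_zero_field[where 'a='a] by simp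
qed

lemma prim_pow_mod: "primitive_root n \<alpha> \<Longrightarrow> \<alpha> ^ m = \<alpha> ^ (m mod n)"
proof -
  assume p: "primitive_root n \<alpha>"
  have "\<alpha> ^ m = \<alpha> ^ (n * (m div n) + m mod n)" by simp
  also have "\<dots> = (\<alpha> ^ n) ^ (m div n) * \<alpha> ^ (m mod n)" by (simp only: power_add power_mult)
  finally show ?thesis using p by (simp add: primitive_root_def)
qed

lemma prim_ne1: "primitive_root n \<alpha> \<Longrightarrow> \<not> n dvd m \<Longrightarrow> \<alpha> ^ m \<noteq> 1"
  using prim_pow_mod[of n \<alpha> m] unfolding primitive_root_def
  by (metis mod_less_divisor mod_greater_zero_iff_not_dvd)

lemma geo0:
  assumes p: "primitive_root n \<alpha>" and m: "\<not> n dvd m"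
  shows "(\<Sum>j<n. \<alpha> ^ (m * j)) = 0"
proof -
  have b: "\<alpha> ^ m \<noteq> 1" using prim_ne1[OF p m] .
  have "(\<Sum>j<n. \<alpha> ^ (m * j)) = (\<Sum>j<n. (\<alpha> ^ m) ^ j)" by (simp add: power_mult)
  also have "\<dots> = ((\<alpha> ^ m) ^ n - 1) / (\<alpha> ^ m - 1)" by (rule geometric_sum[OF b])
  also have "(\<alpha> ^ m) ^ n = 1" using p
    by (metis power_mult mult.commute power_one primitive_root_def)
  finally show ?thesis by simp
qed

lemma geo1:
  assumes p: "primitive_root n \<alpha>" and m: "n dvd m"
  shows "(\<Sum>j<n. \<alpha> ^ (m * j)) = of_nat n"
proof -
  have "\<alpha> ^ (m * j) = 1" for j
    using prim_pow_mod[OF p, of "m*j"] m by simp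
  then show ?thesis by simp
qed

lemma prim_inj:
  assumes p: "primitive_root n \<alpha>" and "i < n" "j < n" "\<alpha> ^ i = \<alpha> ^ j"
  shows "i = j"
proof (rule ccontr)
  assume ne: "i \<noteq> j"
  have a0: "\<alpha> \<noteq> 0" using p unfolding primitive_root_def by (metis power_0_left zero_neq_one gr_implies_not0)
  { fix i j :: nat assume ij: "i < j" "j < n" "\<alpha> ^ i = \<alpha> ^ j"
    have "\<alpha> ^ j = \<alpha> ^ i * \<alpha> ^ (j - i)" using ij(1) by (metis le_add_diff_inverse less_imp_le power_add)
    then have "\<alpha> ^ (j - i) = 1" using ij a0 by simp
    then have False using p ij unfolding primitive_root_def by auto }
  then show False using assms ne by (metis linorder_neqE_nat)
qed


definition ev :: "nat \<Rightarrow> 'a::field \<Rightarrow> (nat \<Rightarrow> 'a) \<Rightarrow> nat \<Rightarrow> 'a" where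
  "ev n \<alpha> f = (\<lambda>j. if j < n then (\<Sum>a<n. f a * \<alpha> ^ (a * j)) else 0)"

definition dotp :: "nat \<Rightarrow> (nat \<Rightarrow> 'a::comm_ring) \<Rightarrow> (nat \<Rightarrow> 'a) \<Rightarrow> 'a" where
  "dotp n u v = (\<Sum>i<n. u i * v i)"

definition supp_in :: "nat set \<Rightarrow> (nat \<Rightarrow> 'a::zero) set" where
  "supp_in F = {f. \<forall>a. a \<notin> F \<longrightarrow> f a = 0}"

definition perp :: "nat \<Rightarrow> (nat \<Rightarrow> 'a::comm_ring) set \<Rightarrow> (nat \<Rightarrow> 'a) set" where
  "perp n A = {y \<in> words n. \<forall>x\<in>A. dotp n x y = 0}"

lemma ev_sum:
  "(\<Sum>j<n. ev n \<alpha> f j * \<alpha> ^ (m * j)) = (\<Sum>a<n. f a * (\<Sum>j<n. \<alpha> ^ ((a + m) * j)))"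
proof -
  have "(\<Sum>j<n. ev n \<alpha> f j * \<alpha> ^ (m * j)) = (\<Sum>j<n. \<Sum>a<n. f a * \<alpha> ^ ((a + m) * j))"
    by (rule sum.cong) (simp_all add: ev_def sum_distrib_right add_mult_distrib power_add mult.assoc)
  also have "\<dots> = (\<Sum>a<n. \<Sum>j<n. f a * \<alpha> ^ ((a + m) * j))" by (rule sum.swap)
  finally show ?thesis by (simp add: sum_distrib_left)
qed

lemma not_dvd_between: assumes "(n::nat) < m" "m < 2 * n" shows "\<not> n dvd m"
proof
  assume "n dvd m"
  note a = assms this
  have "m mod n = (m - n) mod n" using a by (simp add: le_mod_geq)
  also have "\<dots> = m - n" using a by (intro mod_less) linarith
  finally have "m mod n = m - n" .
  moreover have "m mod n = 0" using a by simp
  ultimately show False using a by linarith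
qed

lemma not_dvd_small: "0 < (m::nat) \<Longrightarrow> m < n \<Longrightarrow> \<not> n dvd m"
  by (simp add: nat_dvd_not_less)

lemma ev_inv:
  assumes p: "primitive_root n \<alpha>" and c: "c < n"
  shows "(\<Sum>j<n. ev n \<alpha> f j * \<alpha> ^ ((n - c) * j)) = of_nat n * f c"
proof -
  have "(\<Sum>j<n. ev n \<alpha> f j * \<alpha> ^ ((n - c) * j)) = (\<Sum>a<n. f a * (if a = c then of_nat n else 0))"
    unfolding ev_sum
  proof (rule sum.cong)
    fix a assume a: "a \<in> {..<n}"
    show "f a * (\<Sum>j<n. \<alpha> ^ ((a + (n - c)) * j)) = f a * (if a = c then of_nat n else 0)"
    proof (cases "a = c")
      case True then show ?thesis using geo1[OF p, of "a + (n - c)"] c by simp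
    next
      case False
      have "\<not> n dvd (a + (n - c))"
      proof (cases "a < c")
        case True then show ?thesis using c by (intro not_dvd_small) auto
      next
        case False then show ?thesis using c a \<open>a \<noteq> c\<close> by (intro not_dvd_between) auto
      qed
      then show ?thesis using geo0[OF p] False by simp
    qed
  qed simp
  also have "\<dots> = of_nat n * f c" using c by (simp add: if_distrib sum.delta cong: if_cong)
  finally show ?thesis .
qed

lemma card_supp_in:
  assumes "finite F"
  shows "card (supp_in F :: (nat \<Rightarrow> 'a::{finite,zero}) set) = card (UNIV::'a set) ^ card F"
proof -
  have "bij_betw (\<lambda>f. restrict f F) (supp_in F :: (nat \<Rightarrow> 'a) set) (PiE F (\<lambda>_. UNIV))"
  proof (rule bij_betw_imageI)
    show "inj_on (\<lambda>f. restrict f F) (supp_in F :: (nat \<Rightarrow> 'a) set)"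
    proof (rule inj_onI)
      fix f g :: "nat \<Rightarrow> 'a" assume "f \<in> supp_in F" "g \<in> supp_in F" "restrict f F = restrict g F"
      note h = this
      show "f = g"
      proof
        fix a show "f a = g a"
        proof (cases "a \<in> F")
          case True then show ?thesis using h(3) by (metis restrict_apply')
        next
          case False then show ?thesis using h(1,2) by (simp add: supp_in_def)
        qed
      qed
    qed
    show "(\<lambda>f. restrict f F) ` (supp_in F :: (nat \<Rightarrow> 'a) set) = PiE F (\<lambda>_. UNIV)"
    proof
      show "(\<lambda>f. restrict f F) ` supp_in F \<subseteq> PiE F (\<lambda>_. UNIV)" by (simp add: image_subsetI)
      show "PiE F (\<lambda>_. UNIV) \<subseteq> (\<lambda>f. restrict f F) ` (supp_in F :: (nat \<Rightarrow> 'a) set)"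
      proof
        fix g assume g: "g \<in> PiE F (\<lambda>_. (UNIV :: 'a set))"
        let ?f = "\<lambda>a. if a \<in> F then g a else 0"
        have f1: "?f \<in> supp_in F" by (simp add: supp_in_def)
        have f2: "g = restrict ?f F" using g by (simp add: fun_eq_iff PiE_def extensional_def restrict_def)
        show "g \<in> (\<lambda>f. restrict f F) ` supp_in F" by (rule image_eqI[where f="\<lambda>f. restrict f F" and x="?f", OF f2 f1])
      qed
    qed
  qed
  then have "card (supp_in F :: (nat \<Rightarrow> 'a) set) = card (PiE F (\<lambda>_. (UNIV :: 'a set)))"
    by (rule bij_betw_same_card)
  also have "\<dots> = card (UNIV::'a set) ^ card F" using assms by (simp add: card_PiE)
  finally show ?thesis .
qed

lemma poly_sum_m:
  fixes p :: "'a::field poly"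
  assumes "degree p < m"
  shows "poly p x = (\<Sum>e<m. coeff p e * x ^ e)"
proof -
  have "poly p x = (\<Sum>e\<le>degree p. coeff p e * x ^ e)" by (rule poly_altdef)
  also have "\<dots> = (\<Sum>e<m. coeff p e * x ^ e)"
    by (rule sum.mono_neutral_left) (use assms in \<open>auto simp: coeff_eq_0\<close>)
  finally show ?thesis .
qed



lemma pw: "(x::'a::comm_monoid_mult) ^ ((e + m) * j) = x ^ (m * j) * (x ^ j) ^ e"
proof -
  have "(e + m) * j = j * e + m * j" by (simp add: algebra_simps)
  then have "x ^ ((e + m) * j) = x ^ (j * e) * x ^ (m * j)" by (simp only: power_add)
  also have "x ^ (j * e) = (x ^ j) ^ e" by (rule power_mult)
  finally show ?thesis by (simp add: mult.commute)
qed



locale rs =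
  fixes n k b :: nat and \<alpha> :: "'a::{finite,field}"
  assumes prim: "primitive_root n \<alpha>" and kpos: "0 < k" and kn: "k < n" and bpos: "0 < b"
    and b2: "2 * b \<le> k + 1" and nb: "2 * k + 1 \<le> n + 2 * b" and nz: "of_nat n \<noteq> (0::'a)"
begin

definition "FF = {b..<b + (n - k)}"
definition "AA = ev n \<alpha> ` supp_in FF"
definition "HH = ev n \<alpha> ` supp_in {b..k-b}"

lemma bk: "b \<le> k" using bpos b2 by linarith

lemma FF_sub: "FF \<subseteq> {..<n}" using bk kn by (auto simp: FF_def)

lemma a0: "\<alpha> \<noteq> 0"
  using prim unfolding primitive_root_def by (metis power_0_left zero_neq_one gr_implies_not0)

lemma ev_words: "ev n \<alpha> f \<in> words n" by (simp add: ev_def words_def)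

lemma supp_mono: "F \<subseteq> G \<Longrightarrow> supp_in F \<subseteq> supp_in G"
  by (auto simp: supp_in_def)

lemma ev_inj:
  assumes "f \<in> supp_in {..<n}" "g \<in> supp_in {..<n}" "ev n \<alpha> f = ev n \<alpha> g"
  shows "f = g"
proof
  fix c show "f c = g c"
  proof (cases "c < n")
    case True
    have "of_nat n * f c = (\<Sum>j<n. ev n \<alpha> f j * \<alpha> ^ ((n - c) * j))"
      using ev_inv[OF prim True, of f] by simp
    also have "\<dots> = (\<Sum>j<n. ev n \<alpha> g j * \<alpha> ^ ((n - c) * j))" using assms(3) by simp
    also have "\<dots> = of_nat n * g c" by (rule ev_inv[OF prim True])
    finally have "of_nat n * f c = of_nat n * g c" .
    then show ?thesis using nz by simp
  next
    case False then show ?thesis using assms(1,2) by (simp add: supp_in_def)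
  qed
qed

lemma card_ev:
  assumes "F \<subseteq> {..<n}"
  shows "card (ev n \<alpha> ` supp_in F) = card (UNIV::'a set) ^ card F"
proof -
  have fin: "finite F" using assms finite_subset by blast
  have "inj_on (ev n \<alpha>) (supp_in F)"
  proof (rule inj_onI)
    fix f g assume h: "f \<in> supp_in F" "g \<in> supp_in F" "ev n \<alpha> f = ev n \<alpha> g"
    show "f = g" by (rule ev_inj[OF subsetD[OF supp_mono[OF assms] h(1)] subsetD[OF supp_mono[OF assms] h(2)] h(3)])
  qed
  then have "card (ev n \<alpha> ` supp_in F) = card (supp_in F :: (nat \<Rightarrow> 'a) set)" by (rule card_image)
  also have "\<dots> = card (UNIV::'a set) ^ card F" by (rule card_supp_in[OF fin])
  finally show ?thesis .
qed

lemma zero_ev: "ev n \<alpha> (\<lambda>_. 0) = (\<lambda>_. 0)" by (simp add: ev_def fun_eq_iff)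

lemma zero_AA: "(\<lambda>_. 0) \<in> AA"
proof -
  have "(\<lambda>_. 0) \<in> (supp_in FF :: (nat \<Rightarrow> 'a) set)" by (simp add: supp_in_def)
  then show ?thesis unfolding AA_def using zero_ev by (metis image_eqI)
qed

lemma add_AA: assumes "x \<in> AA" "y \<in> AA" shows "(\<lambda>i. x i + y i) \<in> AA"
proof -
  obtain f g where f: "f \<in> supp_in FF" "x = ev n \<alpha> f" and g: "g \<in> supp_in FF" "y = ev n \<alpha> g"
    using assms unfolding AA_def by blast
  have "(\<lambda>i. x i + y i) = ev n \<alpha> (\<lambda>a. f a + g a)"
    using f g by (simp add: ev_def fun_eq_iff sum.distrib distrib_right)
  moreover have "(\<lambda>a. f a + g a) \<in> supp_in FF" using f g by (simp add: supp_in_def)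
  ultimately show ?thesis unfolding AA_def by blast
qed

lemma smult_AA: assumes "x \<in> AA" shows "(\<lambda>i. c * x i) \<in> AA"
proof -
  obtain f where f: "f \<in> supp_in FF" "x = ev n \<alpha> f"
    using assms unfolding AA_def by blast
  have "(\<lambda>i. c * x i) = ev n \<alpha> (\<lambda>a. c * f a)"
    using f by (simp add: ev_def fun_eq_iff sum_distrib_left mult.assoc)
  moreover have "(\<lambda>a. c * f a) \<in> supp_in FF" using f by (simp add: supp_in_def)
  ultimately show ?thesis unfolding AA_def by blast
qed

lemma AA_words: "AA \<subseteq> words n" using ev_words unfolding AA_def by blast

lemma dotp_ev:
  "dotp n (ev n \<alpha> g) (ev n \<alpha> f) = (\<Sum>c<n. f c * (\<Sum>a<n. g a * (\<Sum>j<n. \<alpha> ^ ((a + c) * j))))"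
proof -
  have evf: "\<And>j. j < n \<Longrightarrow> ev n \<alpha> f j = (\<Sum>c<n. f c * \<alpha> ^ (c * j))" by (simp add: ev_def)
  have "dotp n (ev n \<alpha> g) (ev n \<alpha> f) = (\<Sum>j<n. \<Sum>c<n. f c * (ev n \<alpha> g j * \<alpha> ^ (c * j)))"
    unfolding dotp_def
    by (rule sum.cong[OF refl]) (simp add: evf sum_distrib_left mult_ac)
  also have "\<dots> = (\<Sum>c<n. \<Sum>j<n. f c * (ev n \<alpha> g j * \<alpha> ^ (c * j)))" by (rule sum.swap)
  also have "\<dots> = (\<Sum>c<n. f c * (\<Sum>a<n. g a * (\<Sum>j<n. \<alpha> ^ ((a + c) * j))))"
    by (simp add: sum_distrib_left[symmetric] ev_sum)
  finally show ?thesis .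
qed

lemma orth:
  assumes "\<And>a c. a < n \<Longrightarrow> c < n \<Longrightarrow> g a \<noteq> 0 \<Longrightarrow> f c \<noteq> 0 \<Longrightarrow> \<not> n dvd (a + c)"
  shows "dotp n (ev n \<alpha> g) (ev n \<alpha> f) = 0"
  unfolding dotp_ev
proof (rule sum.neutral, rule ballI)
  fix c assume c: "c \<in> {..<n}"
  show "f c * (\<Sum>a<n. g a * (\<Sum>j<n. \<alpha> ^ ((a + c) * j))) = 0"
  proof (cases "f c = 0")
    case False
    have "(\<Sum>a<n. g a * (\<Sum>j<n. \<alpha> ^ ((a + c) * j))) = 0"
      by (rule sum.neutral) (use assms c False geo0[OF prim] in auto)
    then show ?thesis by simp
  qed simp
qed

lemma dotp_comm: "dotp n u v = dotp n v u" by (simp add: dotp_def mult.commute)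


lemma ev_mono:
  assumes "c < n" "j < n"
  shows "ev n \<alpha> (\<lambda>a. if a = c then 1 else 0) j = \<alpha> ^ (c * j)"
proof -
  have "(\<Sum>a<n. (if a = c then 1 else 0) * \<alpha> ^ (a * j)) = (\<Sum>a<n. if a = c then \<alpha> ^ (a * j) else 0)"
    by (rule sum.cong) auto
  then show ?thesis using assms by (simp add: ev_def)
qed

lemma HH_eq: "HH = AA \<inter> perp n AA"
proof
  have sub: "{b..k-b} \<subseteq> FF" using nb by (auto simp: FF_def)
  show "HH \<subseteq> AA \<inter> perp n AA"
  proof
    fix x assume "x \<in> HH"
    then obtain f where f: "f \<in> supp_in {b..k-b}" "x = ev n \<alpha> f" unfolding HH_def by blast
    have "x \<in> AA" using f supp_mono[OF sub] unfolding AA_def by blast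
    moreover have "x \<in> perp n AA"
      unfolding perp_def
    proof (intro CollectI conjI ballI)
      show "x \<in> words n" using f ev_words by simp
      fix y assume "y \<in> AA"
      then obtain g where g: "g \<in> supp_in FF" "y = ev n \<alpha> g" unfolding AA_def by blast
      show "dotp n y x = 0" unfolding f(2) g(2)
      proof (rule orth)
        fix a c assume ac: "a < n" "c < n" "g a \<noteq> 0" "f c \<noteq> 0"
        then have "a \<in> FF" "c \<in> {b..k-b}" using f g by (auto simp: supp_in_def)
        then have "0 < a + c" "a + c < n" using bpos bk nb by (auto simp: FF_def)
        then show "\<not> n dvd (a + c)" by (rule not_dvd_small)
      qed
    qed
    ultimately show "x \<in> AA \<inter> perp n AA" by blast
  qed
  show "AA \<inter> perp n AA \<subseteq> HH"
  proof
    fix y assume y: "y \<in> AA \<inter> perp n AA"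
    then obtain f where f: "f \<in> supp_in FF" "y = ev n \<alpha> f" unfolding AA_def by blast
    have "f \<in> supp_in {b..k-b}" unfolding supp_in_def
    proof (intro CollectI allI impI)
      fix a assume a: "a \<notin> {b..k-b}"
      show "f a = 0"
      proof (cases "a \<in> FF")
        case False then show ?thesis using f by (simp add: supp_in_def)
      next
        case True
        then have a1: "k - b < a" "a < n" "b \<le> a" "a \<le> n - b" using a bk kn b2 by (auto simp: FF_def)
        define c where "c = n - a"
        have c: "c < n" "c \<in> FF" using a1 bpos b2 unfolding c_def FF_def by auto
        let ?m = "\<lambda>a'. if a' = c then (1::'a) else 0"
        have "?m \<in> supp_in FF" using c by (simp add: supp_in_def)
        then have "ev n \<alpha> ?m \<in> AA" unfolding AA_def by blast
        then have "dotp n (ev n \<alpha> ?m) y = 0" using y unfolding perp_def by blast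
        moreover have "dotp n (ev n \<alpha> ?m) y = (\<Sum>j<n. ev n \<alpha> f j * \<alpha> ^ ((n - a) * j))"
          unfolding dotp_def f(2) c_def[symmetric]
          by (rule sum.cong[OF refl]) (simp add: ev_mono[OF c(1)] mult.commute)
        moreover have "\<dots> = of_nat n * f a" by (rule ev_inv[OF prim a1(2)])
        ultimately show ?thesis using nz by simp
      qed
    qed
    then show "y \<in> HH" unfolding HH_def using f by blast
  qed
qed

lemma card_AA: "card AA = card (UNIV::'a set) ^ (n - k)"
  unfolding AA_def using card_ev[OF FF_sub] by (simp add: FF_def)

lemma card_HH: "card HH = card (UNIV::'a set) ^ (k + 1 - 2 * b)"
proof -
  have "{b..k-b} \<subseteq> {..<n}" using kn by auto
  moreover have "Suc (k - b) - b = k + 1 - 2 * b" using bk by simp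
  ultimately show ?thesis using card_ev unfolding HH_def by simp
qed

lemma poly_ev:
  fixes g :: "'a poly"
  assumes dg: "degree g < n - k"
  shows "\<exists>f\<in>supp_in FF. \<forall>j<n. ev n \<alpha> f j = \<alpha> ^ (b * j) * poly g (\<alpha> ^ j)"
proof
  define f where "f = (\<lambda>a. if b \<le> a \<and> a < b + (n - k) then coeff g (a - b) else 0)"
  show "f \<in> supp_in FF" by (simp add: supp_in_def FF_def f_def)
  show "\<forall>j<n. ev n \<alpha> f j = \<alpha> ^ (b * j) * poly g (\<alpha> ^ j)"
  proof (intro allI impI)
    fix j assume j: "j < n"
    have "ev n \<alpha> f j = (\<Sum>a<n. f a * \<alpha> ^ (a * j))" using j by (simp add: ev_def)
    also have "\<dots> = (\<Sum>a\<in>FF. f a * \<alpha> ^ (a * j))"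
      by (rule sum.mono_neutral_right) (use FF_sub in \<open>auto simp: f_def FF_def\<close>)
    also have "\<dots> = (\<Sum>a\<in>{0 + b..<(n - k) + b}. coeff g (a - b) * \<alpha> ^ (a * j))"
      unfolding FF_def by (rule sum.cong) (auto simp: f_def)
    also have "\<dots> = (\<Sum>e\<in>{0..<n - k}. coeff g e * \<alpha> ^ ((e + b) * j))"
      by (subst sum.shift_bounds_nat_ivl) simp
    also have "\<dots> = (\<Sum>e<n - k. \<alpha> ^ (b * j) * (coeff g e * (\<alpha> ^ j) ^ e))"
      by (rule sum.cong, simp add: atLeast0LessThan, simp only: pw, simp add: mult_ac)
    also have "\<dots> = \<alpha> ^ (b * j) * poly g (\<alpha> ^ j)"
      by (simp add: sum_distrib_left[symmetric] poly_sum_m[OF dg])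
    finally show "ev n \<alpha> f j = \<alpha> ^ (b * j) * poly g (\<alpha> ^ j)" .
  qed
qed


lemma weight_perp:
  assumes x: "x \<in> perp n AA" and nz0: "x \<noteq> (\<lambda>_. 0)"
  shows "n - k + 1 \<le> card {i. i < n \<and> x i \<noteq> 0}"
proof (rule ccontr)
  define T where "T = {i. i < n \<and> x i \<noteq> 0}"
  assume "\<not> n - k + 1 \<le> card {i. i < n \<and> x i \<noteq> 0}"
  then have cT: "card T \<le> n - k" unfolding T_def by simp
  have finT: "finite T" unfolding T_def by simp
  have "\<exists>i. x i \<noteq> 0"
  proof (rule ccontr)
    assume "\<not> (\<exists>i. x i \<noteq> 0)"
    then have "x = (\<lambda>_. 0)" by (simp add: fun_eq_iff)
    with nz0 show False by simp
  qed
  then obtain i0 where i0: "x i0 \<noteq> 0" by blast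
  have xw: "x \<in> words n" using x unfolding perp_def by blast
  have xw': "\<forall>i\<ge>n. x i = 0" using xw unfolding words_def by simp
  have i0n: "i0 < n" using xw' i0 by (cases "i0 < n") auto
  have i0T: "i0 \<in> T" using i0 i0n unfolding T_def by simp
  define g where "g = (\<Prod>t\<in>T - {i0}. [:- (\<alpha> ^ t), 1:])"
  have "degree g \<le> (\<Sum>t\<in>T - {i0}. degree [:- (\<alpha> ^ t), (1::'a):])"
    unfolding g_def using degree_prod_sum_le[of "T - {i0}" "\<lambda>t. [:- (\<alpha> ^ t), (1::'a):]"] finT
    by (simp add: o_def)
  also have "\<dots> = card (T - {i0})" by simp
  also have "\<dots> = card T - 1" using i0T finT by simp
  finally have dg0: "degree g \<le> card T - 1" .
  have "card T > 0" using finT i0T card_gt_0_iff by blast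
  then have dg: "degree g < n - k" using dg0 cT kn by linarith
  have pg: "poly g z = (\<Prod>t\<in>T - {i0}. z - \<alpha> ^ t)" for z
    unfolding g_def by (simp add: poly_prod)
  obtain f where f: "f \<in> supp_in FF" "\<forall>j<n. ev n \<alpha> f j = \<alpha> ^ (b * j) * poly g (\<alpha> ^ j)"
    using poly_ev[OF dg] by blast
  have "ev n \<alpha> f \<in> AA" using f unfolding AA_def by blast
  then have d0: "dotp n (ev n \<alpha> f) x = 0" using x unfolding perp_def by blast
  have "dotp n (ev n \<alpha> f) x = (\<Sum>j<n. \<alpha> ^ (b * j) * poly g (\<alpha> ^ j) * x j)"
    unfolding dotp_def using f(2) by simp
  also have "\<dots> = \<alpha> ^ (b * i0) * poly g (\<alpha> ^ i0) * x i0 + (\<Sum>j\<in>{..<n} - {i0}. \<alpha> ^ (b * j) * poly g (\<alpha> ^ j) * x j)"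
    using i0n by (subst sum.remove[of "{..<n}" i0]) simp_all
  also have "(\<Sum>j\<in>{..<n} - {i0}. \<alpha> ^ (b * j) * poly g (\<alpha> ^ j) * x j) = 0"
  proof (rule sum.neutral, rule ballI)
    fix j assume j: "j \<in> {..<n} - {i0}"
    show "\<alpha> ^ (b * j) * poly g (\<alpha> ^ j) * x j = 0"
    proof (cases "x j = 0")
      case False
      then have "j \<in> T - {i0}" using j unfolding T_def by auto
      then have "poly g (\<alpha> ^ j) = 0" unfolding pg using finT by auto
      then show ?thesis by simp
    qed simp
  qed
  finally have "\<alpha> ^ (b * i0) * poly g (\<alpha> ^ i0) * x i0 = 0" using d0 by simp
  moreover have "poly g (\<alpha> ^ i0) \<noteq> 0" unfolding pg
    using finT prim_inj[OF prim i0n] by (auto simp: T_def)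
  ultimately show False using a0 i0 by simp
qed


definition "pp = (\<Prod>i\<in>{..<k-1}. [:- (\<alpha> ^ i), 1:])"
definition "yy = (\<lambda>j. if j < n then \<alpha> ^ ((n - b + 1) * j) * poly pp (\<alpha> ^ j) else 0)"

lemma deg_pp: "degree pp < k"
proof -
  have "degree pp \<le> (\<Sum>i\<in>{..<k-1}. degree [:- (\<alpha> ^ i), (1::'a):])"
    unfolding pp_def using degree_prod_sum_le[of "{..<k-1}" "\<lambda>i. [:- (\<alpha> ^ i), (1::'a):]"]
    by (simp add: o_def)
  also have "\<dots> = k - 1" by simp
  finally show ?thesis using kpos by linarith
qed

lemma poly_pp: "poly pp z = (\<Prod>i\<in>{..<k-1}. z - \<alpha> ^ i)"
  unfolding pp_def by (simp add: poly_prod)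

lemma yy_words: "yy \<in> words n" by (simp add: yy_def words_def)

lemma yy_sum: assumes j: "j < n" shows "yy j = (\<Sum>e<k. coeff pp e * \<alpha> ^ ((e + (n - b + 1)) * j))"
proof -
  have "yy j = \<alpha> ^ ((n - b + 1) * j) * (\<Sum>e<k. coeff pp e * (\<alpha> ^ j) ^ e)"
    using j unfolding yy_def poly_sum_m[OF deg_pp] by simp
  also have "\<dots> = (\<Sum>e<k. coeff pp e * \<alpha> ^ ((e + (n - b + 1)) * j))"
    unfolding sum_distrib_left by (rule sum.cong, simp, simp only: pw, simp add: mult_ac)
  finally show ?thesis .
qed

lemma yy_perp: "yy \<in> perp n AA"
  unfolding perp_def
proof (intro CollectI conjI ballI)
  show "yy \<in> words n" by (rule yy_words)
  fix x assume "x \<in> AA"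
  then obtain f where f: "f \<in> supp_in FF" "x = ev n \<alpha> f" unfolding AA_def by blast
  have "dotp n x yy = (\<Sum>j<n. \<Sum>e<k. coeff pp e * (ev n \<alpha> f j * \<alpha> ^ ((e + (n - b + 1)) * j)))"
    unfolding dotp_def f(2) by (rule sum.cong[OF refl]) (simp add: yy_sum sum_distrib_left mult_ac)
  also have "\<dots> = (\<Sum>e<k. coeff pp e * (\<Sum>j<n. ev n \<alpha> f j * \<alpha> ^ ((e + (n - b + 1)) * j)))"
    by (subst sum.swap) (simp add: sum_distrib_left)
  also have "\<dots> = 0"
  proof (rule sum.neutral, rule ballI)
    fix e assume e: "e \<in> {..<k}"
    have "(\<Sum>j<n. ev n \<alpha> f j * \<alpha> ^ ((e + (n - b + 1)) * j)) = 0"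
      unfolding ev_sum
    proof (rule sum.neutral, rule ballI)
      fix a assume a: "a \<in> {..<n}"
      show "f a * (\<Sum>j<n. \<alpha> ^ ((a + (e + (n - b + 1))) * j)) = 0"
      proof (cases "a \<in> FF")
        case True
        then have "n < a + (e + (n - b + 1))" "a + (e + (n - b + 1)) < 2 * n"
          using e bk kn by (auto simp: FF_def)
        then have "\<not> n dvd (a + (e + (n - b + 1)))" by (rule not_dvd_between)
        from geo0[OF prim this] show ?thesis by simp
      next
        case False then show ?thesis using f by (simp add: supp_in_def)
      qed
    qed
    then show "coeff pp e * (\<Sum>j<n. ev n \<alpha> f j * \<alpha> ^ ((e + (n - b + 1)) * j)) = 0" by simp
  qed
  finally show "dotp n x yy = 0" .
qed

lemma yy_nz: "j < n \<Longrightarrow> yy j \<noteq> 0 \<longleftrightarrow> k - 1 \<le> j"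
proof -
  assume j: "j < n"
  have "yy j \<noteq> 0 \<longleftrightarrow> poly pp (\<alpha> ^ j) \<noteq> 0" using j a0 by (simp add: yy_def)
  also have "\<dots> \<longleftrightarrow> (\<forall>i<k-1. \<alpha> ^ j \<noteq> \<alpha> ^ i)" by (auto simp: poly_pp)
  also have "\<dots> \<longleftrightarrow> k - 1 \<le> j"
  proof
    assume "\<forall>i<k-1. \<alpha> ^ j \<noteq> \<alpha> ^ i" then show "k - 1 \<le> j" by (metis not_le)
  next
    assume h: "k - 1 \<le> j"
    show "\<forall>i<k-1. \<alpha> ^ j \<noteq> \<alpha> ^ i"
    proof (intro allI impI)
      fix i assume i: "i < k - 1"
      then have "i < n" using kn by linarith
      then show "\<alpha> ^ j \<noteq> \<alpha> ^ i" using prim_inj[OF prim j, of i] h i by auto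
    qed
  qed
  finally show ?thesis .
qed

lemma yy_weight: "card {j. j < n \<and> (yy j \<noteq> 0 \<or> (0::'a) \<noteq> 0)} = n - k + 1"
proof -
  have "{j. j < n \<and> (yy j \<noteq> 0 \<or> (0::'a) \<noteq> 0)} = {k-1..<n}"
  proof (intro set_eqI)
    fix x show "x \<in> {j. j < n \<and> (yy j \<noteq> 0 \<or> (0::'a) \<noteq> 0)} \<longleftrightarrow> x \<in> {k-1..<n}"
      using yy_nz[of x] by auto
  qed
  then show ?thesis using kpos kn by simp
qed

lemma yy_notin: "yy \<notin> AA"
proof
  assume "yy \<in> AA"
  then obtain f where f: "f \<in> supp_in FF" "yy = ev n \<alpha> f" unfolding AA_def by blast
  have "(\<Sum>j<n. yy j * \<alpha> ^ ((b - 1) * j)) = 0"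
    unfolding f(2) ev_sum
  proof (rule sum.neutral, rule ballI)
    fix a assume a: "a \<in> {..<n}"
    show "f a * (\<Sum>j<n. \<alpha> ^ ((a + (b - 1)) * j)) = 0"
    proof (cases "a \<in> FF")
      case True
      then have "0 < a + (b - 1)" "a + (b - 1) < n" using bpos b2 by (auto simp: FF_def)
      then have "\<not> n dvd (a + (b - 1))" by (rule not_dvd_small)
      from geo0[OF prim this] show ?thesis by simp
    next
      case False then show ?thesis using f by (simp add: supp_in_def)
    qed
  qed
  moreover have "(\<Sum>j<n. yy j * \<alpha> ^ ((b - 1) * j)) = (\<Sum>j<n. \<Sum>e<k. coeff pp e * \<alpha> ^ ((e + n) * j))"
  proof (rule sum.cong[OF refl])
    fix j assume "j \<in> {..<n}"
    then have j: "j < n" by simp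
    have "yy j * \<alpha> ^ ((b - 1) * j) = (\<Sum>e<k. coeff pp e * (\<alpha> ^ ((e + (n - b + 1)) * j) * \<alpha> ^ ((b - 1) * j)))"
      unfolding yy_sum[OF j] sum_distrib_right by (simp add: mult_ac)
    also have "\<dots> = (\<Sum>e<k. coeff pp e * \<alpha> ^ ((e + n) * j))"
    proof (rule sum.cong[OF refl])
      fix e
      have "e + (n - b + 1) + (b - 1) = e + n" using bpos bk kn by linarith
      then have "(e + (n - b + 1)) * j + (b - 1) * j = (e + n) * j"
        by (metis add_mult_distrib)
      then show "coeff pp e * (\<alpha> ^ ((e + (n - b + 1)) * j) * \<alpha> ^ ((b - 1) * j)) = coeff pp e * \<alpha> ^ ((e + n) * j)"
        by (simp add: power_add[symmetric])
    qed
    finally show "yy j * \<alpha> ^ ((b - 1) * j) = (\<Sum>e<k. coeff pp e * \<alpha> ^ ((e + n) * j))" .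
  qed
  moreover have "\<dots> = (\<Sum>e<k. coeff pp e * (\<Sum>j<n. \<alpha> ^ ((e + n) * j)))"
    by (subst sum.swap) (simp add: sum_distrib_left)
  moreover have "\<dots> = (\<Sum>e<k. coeff pp e * (if e = 0 then of_nat n else 0))"
  proof (rule sum.cong[OF refl])
    fix e assume e: "e \<in> {..<k}"
    show "coeff pp e * (\<Sum>j<n. \<alpha> ^ ((e + n) * j)) = coeff pp e * (if e = 0 then of_nat n else 0)"
    proof (cases "e = 0")
      case True then show ?thesis using geo1[OF prim, of "0 + n"] by simp
    next
      case False
      then have "n < e + n" "e + n < 2 * n" using e kn by auto
      then have "\<not> n dvd (e + n)" by (rule not_dvd_between)
      from geo0[OF prim this] show ?thesis using False by simp
    qed
  qed
  moreover have "\<dots> = coeff pp 0 * of_nat n" using kpos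
    by (simp add: if_distrib sum.delta cong: if_cong)
  moreover have "coeff pp 0 \<noteq> 0"
  proof -
    have "coeff pp 0 = poly pp 0" by (simp add: poly_0_coeff_0)
    also have "\<dots> \<noteq> 0" using a0 by (simp add: poly_pp)
    finally show ?thesis .
  qed
  ultimately show False using nz by simp
qed


definition "SS = {p. fst p \<in> AA \<and> snd p \<in> AA}"

lemma symp_pair: "symp n p e = dotp n (fst p) (snd e) - dotp n (snd p) (fst e)"
  by (simp add: symp_def dotp_def sum_subtractf)

lemma dotp_zero_left: "dotp n (\<lambda>_. 0) v = 0" by (simp add: dotp_def)
lemma dotp_zero_right: "dotp n v (\<lambda>_. 0) = 0" by (simp add: dotp_def)

lemma zero_perp: "(\<lambda>_. 0) \<in> perp n AA"
  by (simp add: perp_def words_def dotp_zero_right)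

lemma dual_char: "symp_dual n SS = {e. fst e \<in> perp n AA \<and> snd e \<in> perp n AA}"
proof (intro set_eqI iffI)
  fix e assume e: "e \<in> symp_dual n SS"
  then have sv: "e \<in> svecs n" and h: "\<forall>p\<in>SS. symp n p e = 0" by (auto simp: symp_dual_def)
  have 1: "dotp n w (snd e) = 0" if w: "w \<in> AA" for w
  proof -
    have "(w, \<lambda>_. 0) \<in> SS" using w zero_AA by (simp add: SS_def)
    from h[rule_format, OF this] show ?thesis by (simp add: symp_pair dotp_zero_left)
  qed
  have 2: "dotp n w (fst e) = 0" if w: "w \<in> AA" for w
  proof -
    have "(\<lambda>_. 0, w) \<in> SS" using w zero_AA by (simp add: SS_def)
    from h[rule_format, OF this] show ?thesis by (simp add: symp_pair dotp_zero_left)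
  qed
  show "e \<in> {e. fst e \<in> perp n AA \<and> snd e \<in> perp n AA}"
    using sv 1 2 unfolding svecs_def perp_def by auto
next
  fix e assume e: "e \<in> {e. fst e \<in> perp n AA \<and> snd e \<in> perp n AA}"
  then have "e \<in> svecs n" by (simp add: svecs_def perp_def)
  moreover have "\<forall>p\<in>SS. symp n p e = 0"
    using e by (auto simp: SS_def perp_def symp_pair)
  ultimately show "e \<in> symp_dual n SS" by (simp add: symp_dual_def)
qed

lemma rad_char: "SS \<inter> symp_dual n SS = {p. fst p \<in> HH \<and> snd p \<in> HH}"
  using dual_char HH_eq unfolding SS_def by auto

lemma card_pairs: "card {p. fst p \<in> X \<and> snd p \<in> X} = card X * card X"
proof -
  have "{p. fst p \<in> X \<and> snd p \<in> X} = X \<times> X" by auto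
  then show ?thesis by (simp add: card_cartesian_product)
qed

lemma quenta: "quenta_code n (2 * b - 1) (n - k + 1) (n + 2 * b - 2 * k - 1) SS"
  unfolding quenta_code_def
proof (intro conjI)
  show "ssubspace n SS"
    unfolding ssubspace_def SS_def svecs_def using AA_words zero_AA add_AA smult_AA by auto
  let ?q = "card (UNIV::'a set)"
  have cS: "card SS = ?q ^ (2 * (n - k))"
    unfolding SS_def card_pairs card_AA by (simp add: mult_2 power_add)
  have cR: "card (SS \<inter> symp_dual n SS) = ?q ^ (2 * (k + 1 - 2 * b))"
    unfolding rad_char card_pairs card_HH by (simp add: mult_2 power_add)
  have ar1: "2 * (n - k) = 2 * (k + 1 - 2 * b) + 2 * (n + 2 * b - 2 * k - 1)"
    using bk kn nb b2 by linarith
  have ar2: "2 * b - 1 + 2 * (n - k) = n + (n + 2 * b - 2 * k - 1)"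
    using bk kn nb b2 bpos by linarith
  show "\<exists>s r. card SS = ?q ^ s \<and> card (SS \<inter> symp_dual n SS) = ?q ^ r \<and>
      s = r + 2 * (n + 2 * b - 2 * k - 1) \<and> 2 * b - 1 + s = n + (n + 2 * b - 2 * k - 1)"
    using cS cR ar1 ar2 by blast
  have ydual: "(yy, \<lambda>_. 0) \<in> symp_dual n SS" unfolding dual_char using yy_perp zero_perp by simp
  have ynrad: "(yy, \<lambda>_. 0) \<notin> SS \<inter> symp_dual n SS"
    unfolding rad_char using yy_notin HH_eq by auto
  show "\<exists>e\<in>symp_dual n SS - SS \<inter> symp_dual n SS. symp_weight n e = n - k + 1"
    using ydual ynrad yy_weight by (intro bexI[of _ "(yy, \<lambda>_. 0)"]) (simp_all add: symp_weight_def)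
  show "\<forall>e\<in>symp_dual n SS - SS \<inter> symp_dual n SS. n - k + 1 \<le> symp_weight n e"
  proof
    fix e assume e: "e \<in> symp_dual n SS - SS \<inter> symp_dual n SS"
    obtain x z where xz: "e = (x, z)" by (cases e)
    have xp: "x \<in> perp n AA" and zp: "z \<in> perp n AA" using e xz dual_char by auto
    have fin: "finite {i. i < n \<and> (x i \<noteq> 0 \<or> z i \<noteq> 0)}" by simp
    have "\<not> (x = (\<lambda>_. 0) \<and> z = (\<lambda>_. 0))"
    proof
      assume "x = (\<lambda>_. 0) \<and> z = (\<lambda>_. 0)"
      moreover have "(\<lambda>_. 0) \<in> HH" using HH_eq zero_AA zero_perp by simp
      ultimately have "e \<in> SS \<inter> symp_dual n SS" unfolding rad_char xz by simp
      then show False using e by simp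
    qed
    then have "x \<noteq> (\<lambda>_. 0) \<or> z \<noteq> (\<lambda>_. 0)" by blast
    then show "n - k + 1 \<le> symp_weight n e"
    proof (elim disjE)
      assume "x \<noteq> (\<lambda>_. 0)"
      then have "n - k + 1 \<le> card {i. i < n \<and> x i \<noteq> 0}" by (rule weight_perp[OF xp])
      also have "\<dots> \<le> card {i. i < n \<and> (x i \<noteq> 0 \<or> z i \<noteq> 0)}" by (rule card_mono[OF fin]) auto
      finally show ?thesis by (simp add: xz symp_weight_def)
    next
      assume "z \<noteq> (\<lambda>_. 0)"
      then have "n - k + 1 \<le> card {i. i < n \<and> z i \<noteq> 0}" by (rule weight_perp[OF zp])
      also have "\<dots> \<le> card {i. i < n \<and> (x i \<noteq> 0 \<or> z i \<noteq> 0)}" by (rule card_mono[OF fin]) auto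
      finally show ?thesis by (simp add: xz symp_weight_def)
    qed
  qed
qed

end

theorem mainTheorem4:
  fixes n k b :: nat and \<alpha> :: "'a::{finite,field}" and C :: "(nat \<Rightarrow> 'a) set"
  assumes "0 < k" and "k < n" and "n \<le> card (UNIV :: 'a set)"
    and "n dvd card (UNIV :: 'a set) - 1"
    and "primitive_root n \<alpha>"
    and "C = RS_code n \<alpha> k b"
    and "0 < b" and "2 * b \<le> k + 1"
    and "2 * k + 1 \<le> n + 2 * b"
  shows "quenta_exists TYPE('a) n (2 * b - 1) (n - k + 1) (n + 2 * b - 2 * k - 1)
         \<and> quenta_MDS n (2 * b - 1) (n - k + 1) (n + 2 * b - 2 * k - 1)
         \<and> (2 * b = k + 1 \<longrightarrow> maximal_entanglement n (2 * b - 1) (n + 2 * b - 2 * k - 1))"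
proof -
  interpret rs n k b \<alpha>
    using assms nz_of_dvd[OF assms(4)] by unfold_locales auto
  have 1: "quenta_exists TYPE('a) n (2 * b - 1) (n - k + 1) (n + 2 * b - 2 * k - 1)"
    unfolding quenta_exists_def using quenta by blast
  have 2: "quenta_MDS n (2 * b - 1) (n - k + 1) (n + 2 * b - 2 * k - 1)"
    unfolding quenta_MDS_def using assms by (simp add: of_nat_diff)
  have 3: "2 * b = k + 1 \<longrightarrow> maximal_entanglement n (2 * b - 1) (n + 2 * b - 2 * k - 1)"
    unfolding maximal_entanglement_def using assms by (simp add: of_nat_diff)
  show ?thesis using 1 2 3 by blast
qed

end
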